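(* Let $\rho \in (-\tfrac{1}{3},0)\cup (0,1)$ and let $\{a_t\}_{t\ge0}$, $\{b_t\}_{t\ge0}$ be sequences satisfying $a_0=b_0=0$, $a_1=b_1$, and $a_{t+1} = \rho(2a_t -a_{t-1}) + b_t - b_{t-1}$ for all $t\geq 1$. Set $\beta_s=b_s-b_{s-1}$, $u=\rho+\sqrt{\rho^2-\rho}$ and $v=\rho-\sqrt{\rho^2-\rho}$ (complex numbers when $0<\rho<1$). Then for all $t\ge0$, $$a_{t+1} = a_1\,\frac{u^{t+1}-v^{t+1}}{u-v} + \sum_{s=1}^t\beta_s\,\frac{u^{t-s+1}-v^{t-s+1}}{u-v}.$$ Moreover, if $0<\rho<1$, then with $\theta=\arccos(\sqrt{\rho})$, for all $t\ge0$, $$a_{t+1}\sin{\theta} = a_1\rho^{t/2}\sin{[(t+1)\theta]} + \sum_{s=1}^t\beta_s\rho^{(t-s)/2}\sin{[(t+1-s)\theta]}.$$ *)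

theory Defs
  imports Complex_Main
begin

end

theory Submission
  imports Defs
begin

fun gg :: "real \<Rightarrow> nat \<Rightarrow> real" where
  "gg r 0 = 0" | "gg r (Suc 0) = 1" | "gg r (Suc (Suc n)) = 2*r*gg r (Suc n) - r * gg r n"

lemma rec_sol:
  fixes \<rho> :: real and a b :: "nat \<Rightarrow> real"
  assumes ha0: "a 0 = 0" and hrec: "\<And>t. t \<ge> 1 \<Longrightarrow> a (t + 1) = \<rho> * (2 * a t - a (t - 1)) + b t - b (t - 1)"
  shows "a (t+1) = a 1 * gg \<rho> (t+1) + (\<Sum>s=1..t. (b s - b (s-1)) * gg \<rho> (t+1-s))"
proof -
  define P where "P t \<longleftrightarrow> a (t+1) = a 1 * gg \<rho> (t+1) + (\<Sum>s=1..t. (b s - b (s-1)) * gg \<rho> (t+1-s))" for t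
  have "P t \<and> P (Suc t)"
  proof (induction t)
    case 0
    have "a 2 = \<rho> * (2 * a 1 - a 0) + b 1 - b 0" using hrec[of 1] by (simp add: numeral_2_eq_2)
    then show ?case by (simp add: P_def ha0 algebra_simps numeral_2_eq_2)
  next
    case (Suc t)
    let ?B = "\<lambda>s. b s - b (s-1)"
    have IH1: "a (t+1) = a 1 * gg \<rho> (t+1) + (\<Sum>s=1..t. ?B s * gg \<rho> (t+1-s))"
      using Suc P_def by blast
    have IH2: "a (t+2) = a 1 * gg \<rho> (t+2) + (\<Sum>s=1..t+1. ?B s * gg \<rho> (t+2-s))"
      using Suc unfolding P_def by (simp add: Suc3_eq_add_3 add.commute)
    have R: "a (t+3) = \<rho> * (2 * a (t+2) - a (t+1)) + ?B (t+2)"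
      using hrec[of "t+2"] by (simp add: numeral_3_eq_3 numeral_2_eq_2)
    have S1: "(\<Sum>s=1..t+2. ?B s * gg \<rho> (t+3-s)) = (\<Sum>s=1..t+1. ?B s * gg \<rho> (t+3-s)) + ?B (t+2)"
      by (simp add: numeral_3_eq_3 numeral_2_eq_2)
    have S2: "(\<Sum>s=1..t+1. ?B s * gg \<rho> (t+3-s)) = (\<Sum>s=1..t+1. 2*\<rho>*(?B s * gg \<rho> (t+2-s)) - \<rho> * (?B s * gg \<rho> (t+1-s)))"
    proof (rule sum.cong)
      fix s assume "s \<in> {1..t+1}"
      then have "t+3-s = Suc (Suc (t+1-s))" "t+2-s = Suc (t+1-s)" by auto
      then show "?B s * gg \<rho> (t+3-s) = 2*\<rho>*(?B s * gg \<rho> (t+2-s)) - \<rho> * (?B s * gg \<rho> (t+1-s))"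
        by (simp add: algebra_simps)
    qed simp
    have S3: "(\<Sum>s=1..t+1. ?B s * gg \<rho> (t+1-s)) = (\<Sum>s=1..t. ?B s * gg \<rho> (t+1-s))"
      by simp
    have G: "gg \<rho> (t+3) = 2*\<rho>*gg \<rho> (t+2) - \<rho> * gg \<rho> (t+1)"
      by (simp add: numeral_3_eq_3 numeral_2_eq_2)
    have S4: "(\<Sum>s=1..t+2. ?B s * gg \<rho> (t+3-s)) = 2*\<rho>*(\<Sum>s=1..t+1. ?B s * gg \<rho> (t+2-s)) - \<rho> * (\<Sum>s=1..t. ?B s * gg \<rho> (t+1-s)) + ?B (t+2)"
      unfolding S1 S2 S3[symmetric] by (simp add: sum_subtractf sum_distrib_left distrib_left)
    have "a (t+3) = a 1 * gg \<rho> (t+3) + (\<Sum>s=1..t+2. ?B s * gg \<rho> (t+3-s))"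
      unfolding S4 G R IH1 IH2 by (simp add: algebra_simps)
    moreover have e1: "t+2+1 = t+3" by simp
    ultimately have "P (t+2)" unfolding P_def by (simp only: e1)
    moreover have e0: "Suc (Suc t) = t+2" by simp
    ultimately have "P (Suc (Suc t))" by (simp only: e0)
    then show ?case using Suc by simp
  qed
  then show ?thesis using P_def by blast
qed

lemma gg_complex:
  fixes u v :: complex
  assumes "u + v = 2 * of_real r" "u * v = of_real r" "u \<noteq> v"
  shows "of_real (gg r n) = (u^n - v^n)/(u - v)"
  using assms
proof (induction r n rule: gg.induct)
  case (1 r) then show ?case by simp
next
  case (2 r) then show ?case by simp
next
  case (3 r n)
  have d: "u - v \<noteq> 0" using 3 by simp
  have e: "u^(Suc (Suc n)) - v^(Suc (Suc n)) = (u+v)*(u^Suc n - v^Suc n) - (u*v)*(u^n - v^n)"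
    by (simp add: algebra_simps)
  have "(u^(Suc (Suc n)) - v^(Suc (Suc n)))/(u-v) = (u+v)*((u^Suc n - v^Suc n)/(u-v)) - (u*v)*((u^n - v^n)/(u-v))"
    unfolding e by (metis diff_divide_distrib times_divide_eq_right)
  moreover have "complex_of_real (gg r (Suc (Suc n))) = 2 * of_real r * of_real (gg r (Suc n)) - of_real r * of_real (gg r n)"
    by simp
  ultimately show ?case using 3 by simp
qed

lemma gg_trig:
  fixes r \<theta> :: real
  assumes "cos \<theta> = sqrt r" "r \<ge> 0"
  shows "gg r n * sin \<theta> * sqrt r = sqrt r ^ n * sin (real n * \<theta>)"
  using assms
proof (induction r n rule: gg.induct)
  case (1 r) then show ?case by simp
next
  case (2 r) then show ?case by simp
next
  case (3 r n)
  have sq: "sqrt r * sqrt r = r" using 3 by simp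
  have "sin (real (Suc (Suc n)) * \<theta>) = 2 * cos \<theta> * sin (real (Suc n) * \<theta>) - sin (real n * \<theta>)"
  proof -
    have a: "real (Suc (Suc n)) * \<theta> = real (Suc n) * \<theta> + \<theta>" by (simp add: algebra_simps)
    have b: "real n * \<theta> = real (Suc n) * \<theta> - \<theta>" by (simp add: algebra_simps)
    show ?thesis unfolding a b sin_add sin_diff by simp
  qed
  moreover note IH1 = "3.IH"(1)[OF "3.prems"] and IH2 = "3.IH"(2)[OF "3.prems"]
  ultimately show ?case
  proof -
    assume H: "sin (real (Suc (Suc n)) * \<theta>) = 2 * cos \<theta> * sin (real (Suc n) * \<theta>) - sin (real n * \<theta>)"
    define q where "q = sqrt r"
    have rq: "r = q*q" using sq q_def by simp
    have c: "cos \<theta> = q" using 3 q_def by simp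
    have "gg r (Suc (Suc n)) * sin \<theta> * q = 2*r*(gg r (Suc n) * sin \<theta> * q) - r * (gg r n * sin \<theta> * q)"
      by (simp add: algebra_simps)
    also have "\<dots> = 2*r*(q^Suc n * sin (real (Suc n) * \<theta>)) - r*(q^n * sin (real n * \<theta>))"
      using IH1 IH2 q_def by simp
    also have "\<dots> = q^Suc (Suc n) * sin (real (Suc (Suc n)) * \<theta>)"
      unfolding H c rq by (simp add: algebra_simps)
    finally show ?thesis using q_def by simp
  qed
qed

theorem lemma3:
  fixes \<rho> :: real and a b :: "nat \<Rightarrow> real"
  assumes hrho: "(-1/3 < \<rho> \<and> \<rho> < 0) \<or> (0 < \<rho> \<and> \<rho> < 1)"
    and ha0: "a 0 = 0" and hb0: "b 0 = 0" and h1: "a 1 = b 1"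
    and hrec: "\<And>t. t \<ge> 1 \<Longrightarrow> a (t + 1) = \<rho> * (2 * a t - a (t - 1)) + b t - b (t - 1)"
  shows "(\<forall>t::nat.
           (let \<beta> = (\<lambda>s. b s - b (s - 1));
                u = complex_of_real \<rho> + csqrt (complex_of_real (\<rho>\<^sup>2 - \<rho>));
                v = complex_of_real \<rho> - csqrt (complex_of_real (\<rho>\<^sup>2 - \<rho>))
            in complex_of_real (a (t + 1)) =
               complex_of_real (a 1) * (u ^ (t + 1) - v ^ (t + 1)) / (u - v)
               + (\<Sum>s = 1..t. complex_of_real (\<beta> s) * (u ^ (t - s + 1) - v ^ (t - s + 1)) / (u - v))))
       \<and> (0 < \<rho> \<longrightarrow>
          (\<forall>t::nat.
           (let \<beta> = (\<lambda>s. b s - b (s - 1)); \<theta> = arccos (sqrt \<rho>)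
            in a (t + 1) * sin \<theta> =
               a 1 * \<rho> powr (real t / 2) * sin (real (t + 1) * \<theta>)
               + (\<Sum>s = 1..t. \<beta> s * \<rho> powr ((real t - real s) / 2) * sin ((real t + 1 - real s) * \<theta>)))))"
proof -
  let ?B = "\<lambda>s. b s - b (s - 1)"
  have main: "a (t+1) = a 1 * gg \<rho> (t+1) + (\<Sum>s=1..t. ?B s * gg \<rho> (t+1-s))" for t
    by (rule rec_sol[OF ha0 hrec])
  have rne: "\<rho>\<^sup>2 - \<rho> \<noteq> 0" using hrho by (auto simp: power2_eq_square)
  define w where "w = csqrt (complex_of_real (\<rho>\<^sup>2 - \<rho>))"
  have w2: "w * w = complex_of_real (\<rho>\<^sup>2 - \<rho>)" unfolding w_def
    using power2_csqrt[of "complex_of_real (\<rho>\<^sup>2 - \<rho>)"] by (simp add: power2_eq_square)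
  have rne': "complex_of_real (\<rho>\<^sup>2 - \<rho>) \<noteq> 0" using rne by (metis of_real_eq_0_iff)
  have wne: "w \<noteq> 0" unfolding w_def using rne' csqrt_eq_0 by blast
  define u where "u = complex_of_real \<rho> + w"
  define v where "v = complex_of_real \<rho> - w"
  have uv1: "u + v = 2 * of_real \<rho>" unfolding u_def v_def by simp
  have uv2: "u * v = of_real \<rho>"
  proof -
    have "u * v = of_real \<rho> * of_real \<rho> - w * w" unfolding u_def v_def by (simp add: algebra_simps)
    also have "\<dots> = of_real \<rho>" unfolding w2 by (simp add: power2_eq_square)
    finally show ?thesis .
  qed
  have uv3: "u \<noteq> v" unfolding u_def v_def using wne by simp
  have G: "complex_of_real (gg \<rho> n) = (u^n - v^n)/(u - v)" for n
    by (rule gg_complex[OF uv1 uv2 uv3])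
  have P1: "complex_of_real (a (t + 1)) =
               complex_of_real (a 1) * (u ^ (t + 1) - v ^ (t + 1)) / (u - v)
               + (\<Sum>s = 1..t. complex_of_real (?B s) * (u ^ (t - s + 1) - v ^ (t - s + 1)) / (u - v))" for t
  proof -
    have "complex_of_real (a (t + 1)) = of_real (a 1) * of_real (gg \<rho> (t+1)) + (\<Sum>s=1..t. of_real (?B s) * of_real (gg \<rho> (t+1-s)))"
      unfolding main[of t] by simp
    also have "\<dots> = complex_of_real (a 1) * (u ^ (t + 1) - v ^ (t + 1)) / (u - v)
               + (\<Sum>s = 1..t. complex_of_real (?B s) * (u ^ (t - s + 1) - v ^ (t - s + 1)) / (u - v))"
    proof -
      have "(\<Sum>s=1..t. of_real (?B s) * of_real (gg \<rho> (t+1-s))) = (\<Sum>s = 1..t. complex_of_real (?B s) * (u ^ (t - s + 1) - v ^ (t - s + 1)) / (u - v))"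
      proof (rule sum.cong)
        fix s assume "s \<in> {1..t}"
        then have "t + 1 - s = t - s + 1" by auto
        then show "complex_of_real (?B s) * of_real (gg \<rho> (t+1-s)) = complex_of_real (?B s) * (u ^ (t - s + 1) - v ^ (t - s + 1)) / (u - v)"
          unfolding G by simp
      qed simp
      then show ?thesis unfolding G by simp
    qed
    finally show ?thesis .
  qed
  have P2: "a (t + 1) * sin \<theta> =
               a 1 * \<rho> powr (real t / 2) * sin (real (t + 1) * \<theta>)
               + (\<Sum>s = 1..t. ?B s * \<rho> powr ((real t - real s) / 2) * sin ((real t + 1 - real s) * \<theta>))"
    if rp: "0 < \<rho>" and th: "\<theta> = arccos (sqrt \<rho>)" for t \<theta>
  proof -
    have r1: "\<rho> < 1" using hrho rp by auto
    have sq0: "sqrt \<rho> \<ge> 0" using rp by simp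
    have sq1: "sqrt \<rho> \<le> 1" using r1 by simp
    have c: "cos \<theta> = sqrt \<rho>" unfolding th
      by (rule cos_arccos) (use sq0 sq1 in linarith)+
    have qpos: "sqrt \<rho> > 0" using rp by simp
    have T: "gg \<rho> (k+1) * sin \<theta> = \<rho> powr (real k / 2) * sin (real (k+1) * \<theta>)" for k
    proof -
      have "gg \<rho> (k+1) * sin \<theta> * sqrt \<rho> = sqrt \<rho> ^ (k+1) * sin (real (k+1) * \<theta>)"
        by (rule gg_trig[OF c]) (use rp in simp)
      then have "gg \<rho> (k+1) * sin \<theta> = sqrt \<rho> ^ k * sin (real (k+1) * \<theta>)"
        using qpos by (simp add: algebra_simps)
      moreover have "sqrt \<rho> ^ k = \<rho> powr (real k / 2)"
      proof -
        have "sqrt \<rho> ^ k = (\<rho> powr (1/2)) ^ k" using rp by (simp add: powr_half_sqrt)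
        also have "\<dots> = \<rho> powr (real k / 2)" using rp by (simp add: powr_realpow[symmetric] powr_powr)
        finally show ?thesis .
      qed
      ultimately show ?thesis by simp
    qed
    have "a (t + 1) * sin \<theta> = a 1 * (gg \<rho> (t+1) * sin \<theta>) + (\<Sum>s=1..t. ?B s * (gg \<rho> (t-s+1) * sin \<theta>))"
    proof -
      have "(\<Sum>s=1..t. ?B s * gg \<rho> (t+1-s)) * sin \<theta> = (\<Sum>s=1..t. ?B s * (gg \<rho> (t-s+1) * sin \<theta>))"
        unfolding sum_distrib_right
      proof (rule sum.cong)
        fix s assume "s \<in> {1..t}"
        then have "t + 1 - s = t - s + 1" by auto
        then show "?B s * gg \<rho> (t+1-s) * sin \<theta> = ?B s * (gg \<rho> (t-s+1) * sin \<theta>)" by simp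
      qed simp
      then show ?thesis unfolding main[of t] by (simp add: algebra_simps)
    qed
    also have "\<dots> = a 1 * \<rho> powr (real t / 2) * sin (real (t + 1) * \<theta>)
               + (\<Sum>s = 1..t. ?B s * \<rho> powr ((real t - real s) / 2) * sin ((real t + 1 - real s) * \<theta>))"
    proof -
      have "(\<Sum>s=1..t. ?B s * (gg \<rho> (t-s+1) * sin \<theta>)) = (\<Sum>s = 1..t. ?B s * \<rho> powr ((real t - real s) / 2) * sin ((real t + 1 - real s) * \<theta>))"
      proof (rule sum.cong)
        fix s assume "s \<in> {1..t}"
        then have e1: "real (t - s) = real t - real s" and e2: "real (t - s + 1) = real t + 1 - real s" by auto
        show "?B s * (gg \<rho> (t-s+1) * sin \<theta>) = ?B s * \<rho> powr ((real t - real s) / 2) * sin ((real t + 1 - real s) * \<theta>)"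
          unfolding T e1 e2 by simp
      qed simp
      then show ?thesis unfolding T by simp
    qed
    finally show ?thesis .
  qed
  show ?thesis
    using P1 P2 unfolding Let_def u_def v_def w_def by blast
qed

end
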